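(* Under the setting of Algorithm 4 with $\sigma>0$, $f\in\mathcal{H}_k$, $g\in\mathcal{H}_{\sigma^2\delta}$, $h=f+g$, and all queried points pairwise distinct, let $X_n=(x_{(n-1)L+1},\dots,x_{nL})$ be the batch selected at round $n$ and $x^*\in\arg\max_{\mathcal{X}}f$. Then $$\frac1L\sum_{i=1}^L\big(f(x^* )-f(x_{(n-1)L+i})\big)\le2\|h\|_{\mathcal{H}_{k^\sigma}}\sqrt{\frac{\operatorname{tr}(\widehat{\operatorname{cov}}_{n-1}(X_n,X_n))}{L}}+2\big(\|h\|_{\mathcal{H}_{k^\sigma}}+\|g\|_{\mathcal{H}_{\sigma^2\delta}}\big)\sigma.$$
   Context: $\delta(x,y)=1$ if $x=y$, else $0$; $k^\sigma=k+\sigma^2\delta$; $\mathcal{H}_{\sigma^2\delta}$ is the RKHS of $\sigma^2\delta$. Observations are $y_i=h(x_i)$; $\widehat m_t(x)=\mathbf{k}_t(x)^T(\mathbf{K}_t+\sigma^2I)^{-1}\mathbf{y}_t$ with $\mathbf{k}_t(x)=[k(x,x_i)]_{i\le t}$, $\mathbf{K}_t=[k(x_i,x_j)]_{i,j\le t}$. $\overline X_n=\{x_1,\dots,x_{nL}\}$; $\widehat{\operatorname{cov}}_n(X,X)=\mathbf{K}(X,X)-\mathbf{K}(\overline X_n,X)^T(\sigma^2I+\mathbf{K}(\overline X_n,\overline X_n))^{-1}\mathbf{K}(\overline X_n,X)$, $\widehat{\operatorname{cov}}_0=\mathbf{K}(X,X)$. Algorithm 4: $X_n$ maximizes over $X=(z_1,\dots,z_L)\in\mathcal{X}^L$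 the quantity $\frac1L\sum_i\widehat m_{(n-1)L}(z_i)+\|h\|_{\mathcal{H}_{k^\sigma}}\big(2\sqrt{\operatorname{tr}(\widehat{\operatorname{cov}}_{n-1}(X,X))/L}-\sqrt{\mathbf 1^T\widehat{\operatorname{cov}}_{n-1}(X,X)\mathbf 1/L^2}\big)$. *)

theory Defs
  imports "HOL-Analysis.Analysis" "Jordan_Normal_Form.Gauss_Jordan_Elimination"
begin

definition kdelta :: "'a \<Rightarrow> 'a \<Rightarrow> real" where
  "kdelta x y = (if x = y then 1 else 0)"

definition pd_kernel :: "('a \<Rightarrow> 'a \<Rightarrow> real) \<Rightarrow> bool" where
  "pd_kernel k \<longleftrightarrow> (\<forall>x y. k x y = k y x) \<and>
     (\<forall>(m::nat) (xs::nat \<Rightarrow> 'a) (a::nat \<Rightarrow> real).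
        0 \<le> (\<Sum>i<m. \<Sum>j<m. a i * a j * k (xs i) (xs j)))"

(* squared RKHS norm via the Aronszajn/Moore characterization:
   ||f||^2 = sup { (sum_i a_i f(x_i))^2 : sum_ij a_i a_j k(x_i,x_j) <= 1 } *)
definition rkhs_test_values :: "('a \<Rightarrow> 'a \<Rightarrow> real) \<Rightarrow> ('a \<Rightarrow> real) \<Rightarrow> real set" where
  "rkhs_test_values k f = {(\<Sum>i<m. a i * f (xs i))\<^sup>2 | (m::nat) (xs::nat \<Rightarrow> 'a) (a::nat \<Rightarrow> real).
       (\<Sum>i<m. \<Sum>j<m. a i * a j * k (xs i) (xs j)) \<le> 1}"

definition in_rkhs :: "('a \<Rightarrow> 'a \<Rightarrow> real) \<Rightarrow> ('a \<Rightarrow> real) \<Rightarrow> bool" where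
  "in_rkhs k f \<longleftrightarrow> bdd_above (rkhs_test_values k f)"

definition rkhs_norm :: "('a \<Rightarrow> 'a \<Rightarrow> real) \<Rightarrow> ('a \<Rightarrow> real) \<Rightarrow> real" where
  "rkhs_norm k f = sqrt (Sup (rkhs_test_values k f))"

definition kmat :: "('a \<Rightarrow> 'a \<Rightarrow> real) \<Rightarrow> 'a list \<Rightarrow> 'a list \<Rightarrow> real mat" where
  "kmat k xs ys = mat (length xs) (length ys) (\<lambda>(i,j). k (xs ! i) (ys ! j))"

definition reg_inv :: "('a \<Rightarrow> 'a \<Rightarrow> real) \<Rightarrow> real \<Rightarrow> 'a list \<Rightarrow> real mat" where
  "reg_inv k \<sigma> Xb = the (mat_inverse (\<sigma>\<^sup>2 \<cdot>\<^sub>m 1\<^sub>m (length Xb) + kmat k Xb Xb))"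

definition post_mean :: "('a \<Rightarrow> 'a \<Rightarrow> real) \<Rightarrow> real \<Rightarrow> ('a \<Rightarrow> real) \<Rightarrow> 'a list \<Rightarrow> 'a \<Rightarrow> real" where
  "post_mean k \<sigma> h Xb z =
     vec (length Xb) (\<lambda>i. k z (Xb ! i)) \<bullet> (reg_inv k \<sigma> Xb *\<^sub>v vec_of_list (map h Xb))"

definition post_cov :: "('a \<Rightarrow> 'a \<Rightarrow> real) \<Rightarrow> real \<Rightarrow> 'a list \<Rightarrow> 'a list \<Rightarrow> real mat" where
  "post_cov k \<sigma> Xb X =
     kmat k X X - transpose_mat (kmat k Xb X) * reg_inv k \<sigma> Xb * kmat k Xb X"

definition mat_trace :: "real mat \<Rightarrow> real" where
  "mat_trace A = (\<Sum>i<dim_row A. A $$ (i, i))"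

definition mat_total :: "real mat \<Rightarrow> real" where
  "mat_total A = (\<Sum>i<dim_row A. \<Sum>j<dim_col A. A $$ (i, j))"

definition queried :: "(nat \<Rightarrow> 'a) \<Rightarrow> nat \<Rightarrow> 'a list" where
  "queried x t = map x [1..<t+1]"

definition batch :: "(nat \<Rightarrow> 'a) \<Rightarrow> nat \<Rightarrow> nat \<Rightarrow> 'a list" where
  "batch x L n = map x [(n-1)*L+1..<n*L+1]"

(* acquisition function of Algorithm 4 at round n, given ||h||_{H_{k^sigma}} = B *)
definition acq :: "('a \<Rightarrow> 'a \<Rightarrow> real) \<Rightarrow> real \<Rightarrow> ('a \<Rightarrow> real) \<Rightarrow> real \<Rightarrow> (nat \<Rightarrow> 'a)
                   \<Rightarrow> nat \<Rightarrow> nat \<Rightarrow> 'a list \<Rightarrow> real" where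
  "acq k \<sigma> h B x L n Z =
     (let Xb = queried x ((n-1)*L); C = post_cov k \<sigma> Xb Z in
      (1 / real L) * (\<Sum>z\<leftarrow>Z. post_mean k \<sigma> h Xb z)
      + B * (2 * sqrt (mat_trace C / real L) - sqrt (mat_total C / (real L)\<^sup>2)))"

end

theory Submission
  imports Defs "Jordan_Normal_Form.Determinant"
begin

lemma kmat_carrier[simp]: "kmat K P Q \<in> carrier_mat (length P) (length Q)"
  by (simp add: kmat_def)
lemma kmat_dims[simp]: "dim_row (kmat K P Q) = length P" "dim_col (kmat K P Q) = length Q"
  by (simp_all add: kmat_def)
lemma kmat_index[simp]: "i < length P \<Longrightarrow> j < length Q \<Longrightarrow> kmat K P Q $$ (i,j) = K (P!i) (Q!j)"
  by (simp add: kmat_def)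

lemma qf_vec:
  assumes "a \<in> carrier_vec (length P)"
  shows "a \<bullet> (kmat K P P *\<^sub>v a) = (\<Sum>i<length P. \<Sum>j<length P. a$i * a$j * K (P!i) (P!j))"
  using assms
  by (simp add: scalar_prod_def mult_mat_vec_def row_def kmat_def sum_distrib_left atLeast0LessThan
      ac_simps)

lemma bil_vec:
  assumes "a \<in> carrier_vec (length P)" "b \<in> carrier_vec (length Q)"
  shows "a \<bullet> (kmat K P Q *\<^sub>v b) = (\<Sum>i<length P. \<Sum>j<length Q. a$i * b$j * K (P!i) (Q!j))"
  using assms
  by (simp add: scalar_prod_def mult_mat_vec_def row_def kmat_def sum_distrib_left atLeast0LessThan
      ac_simps)

lemma pd_vec:
  assumes "pd_kernel k" "a \<in> carrier_vec (length P)"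
  shows "0 \<le> a \<bullet> (kmat k P P *\<^sub>v a)"
  using assms unfolding qf_vec[OF assms(2)] pd_kernel_def by blast


lemma smult_mat_vec: "(A::real mat) \<in> carrier_mat nr nc \<Longrightarrow> v \<in> carrier_vec nc \<Longrightarrow>
   (c \<cdot>\<^sub>m A) *\<^sub>v v = c \<cdot>\<^sub>v (A *\<^sub>v v)"
  by (intro eq_vecI) auto

lemma self_sprod_pos:
  fixes v :: "real vec"
  assumes "v \<in> carrier_vec n" "v \<noteq> 0\<^sub>v n"
  shows "v \<bullet> v > 0"
proof -
  have "\<exists>i<n. v $ i \<noteq> 0"
  proof (rule ccontr)
    assume "\<not> (\<exists>i<n. v $ i \<noteq> 0)"
    then have "v = 0\<^sub>v n" using assms(1) by (intro eq_vecI) auto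
    then show False using assms(2) by simp
  qed
  then obtain i where i: "i < n" "v $ i \<noteq> 0" by blast
  have "v $ i * v $ i \<le> (\<Sum>j\<in>{0..<n}. v $ j * v $ j)"
    by (rule member_le_sum) (use i in auto)
  moreover have "v $ i * v $ i > 0" using i(2) by (cases "v $ i > 0") (auto simp: mult_neg_neg)
  ultimately show ?thesis using assms unfolding scalar_prod_def by auto
qed

lemma self_sprod_nonneg:
  fixes v :: "real vec"
  shows "v \<bullet> v \<ge> 0"
  unfolding scalar_prod_def by (auto intro: sum_nonneg)

definition Mreg :: "('a \<Rightarrow> 'a \<Rightarrow> real) \<Rightarrow> real \<Rightarrow> 'a list \<Rightarrow> real mat" where
  "Mreg k \<sigma> Xb = \<sigma>\<^sup>2 \<cdot>\<^sub>m 1\<^sub>m (length Xb) + kmat k Xb Xb"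

lemma Mreg_carrier[simp]: "Mreg k \<sigma> Xb \<in> carrier_mat (length Xb) (length Xb)"
  by (simp add: Mreg_def)

lemma Mreg_mult: "u \<in> carrier_vec (length Xb) \<Longrightarrow>
   Mreg k \<sigma> Xb *\<^sub>v u = \<sigma>\<^sup>2 \<cdot>\<^sub>v u + kmat k Xb Xb *\<^sub>v u"
  unfolding Mreg_def
  by (subst add_mult_distrib_mat_vec[of _ "length Xb" "length Xb"]) (auto simp: smult_mat_vec)

lemma Mreg_qf: "pd_kernel k \<Longrightarrow> u \<in> carrier_vec (length Xb) \<Longrightarrow>
   u \<bullet> (Mreg k \<sigma> Xb *\<^sub>v u) \<ge> \<sigma>\<^sup>2 * (u \<bullet> u)"
proof -
  assume pd: "pd_kernel k" and u: "u \<in> carrier_vec (length Xb)"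
  have "u \<bullet> (\<sigma>\<^sup>2 \<cdot>\<^sub>v u + kmat k Xb Xb *\<^sub>v u) = u \<bullet> (\<sigma>\<^sup>2 \<cdot>\<^sub>v u) + u \<bullet> (kmat k Xb Xb *\<^sub>v u)"
    by (rule scalar_prod_add_distrib[of _ "length Xb"]) (use u in \<open>auto intro!: mult_mat_vec_carrier[OF kmat_carrier]\<close>)
  then show ?thesis using pd_vec[OF pd u] u by (simp add: Mreg_mult)
qed

lemma Mreg_sym: "pd_kernel k \<Longrightarrow> transpose_mat (Mreg k \<sigma> Xb) = Mreg k \<sigma> Xb"
  unfolding Mreg_def pd_kernel_def
  by (intro eq_matI) (auto simp: kmat_def)

lemma reg_inv_props:
  assumes pd: "pd_kernel k" and s: "\<sigma> > 0"
  shows "reg_inv k \<sigma> Xb \<in> carrier_mat (length Xb) (length Xb)"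
    "Mreg k \<sigma> Xb * reg_inv k \<sigma> Xb = 1\<^sub>m (length Xb)"
    "reg_inv k \<sigma> Xb * Mreg k \<sigma> Xb = 1\<^sub>m (length Xb)"
proof -
  let ?n = "length Xb"
  let ?M = "Mreg k \<sigma> Xb"
  have Mc: "?M \<in> carrier_mat ?n ?n" by simp
  have "Determinant.det ?M \<noteq> 0"
  proof
    assume "Determinant.det ?M = 0"
    then obtain v where v: "v \<in> carrier_vec ?n" "v \<noteq> 0\<^sub>v ?n" "?M *\<^sub>v v = 0\<^sub>v ?n"
      using det_0_iff_vec_prod_zero_field[OF Mc] by blast
    have "\<sigma>\<^sup>2 * (v \<bullet> v) \<le> v \<bullet> (?M *\<^sub>v v)" using Mreg_qf[OF pd v(1)] .
    also have "\<dots> = 0" using v by simp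
    finally show False using self_sprod_pos[OF v(1,2)] s
      by (smt (verit) mult_pos_pos zero_less_power)
  qed
  note U = det_non_zero_imp_unit[OF Mc this, where b="()"]
  obtain B where B: "mat_inverse ?M = Some B"
  proof (cases "mat_inverse ?M")
    case None
    from mat_inverse(1)[OF Mc None, where b="()"] U show ?thesis by blast
  next
    case (Some B)
    then show ?thesis using that by blast
  qed
  have R: "reg_inv k \<sigma> Xb = B" unfolding reg_inv_def using B by (simp add: Mreg_def)
  show "reg_inv k \<sigma> Xb \<in> carrier_mat ?n ?n" "?M * reg_inv k \<sigma> Xb = 1\<^sub>m ?n"
    "reg_inv k \<sigma> Xb * ?M = 1\<^sub>m ?n"
    using mat_inverse(2)[OF Mc B] R by auto
qed

lemma reg_inv_sym:
  assumes pd: "pd_kernel k" and s: "\<sigma> > 0"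
  shows "transpose_mat (reg_inv k \<sigma> Xb) = reg_inv k \<sigma> Xb"
proof -
  let ?n = "length Xb"
  let ?M = "Mreg k \<sigma> Xb"
  let ?R = "reg_inv k \<sigma> Xb"
  note P = reg_inv_props[OF pd s, of Xb]
  have Rt: "transpose_mat ?R \<in> carrier_mat ?n ?n" using P by simp
  have "transpose_mat ?R * ?M = transpose_mat (transpose_mat ?M * ?R)"
    using P by (simp add: transpose_mult[of _ ?n ?n])
  also have "\<dots> = 1\<^sub>m ?n" using P Mreg_sym[OF pd] by simp
  finally have 1: "transpose_mat ?R * ?M = 1\<^sub>m ?n" .
  have "transpose_mat ?R = transpose_mat ?R * (?M * ?R)" using P Rt by simp
  also have "\<dots> = (transpose_mat ?R * ?M) * ?R" using P Rt by (simp add: assoc_mult_mat[of _ ?n ?n _ ?n _ ?n])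
  also have "\<dots> = ?R" using 1 P by simp
  finally show ?thesis .
qed

definition QF :: "('a \<Rightarrow> 'a \<Rightarrow> real) \<Rightarrow> (nat \<Rightarrow> 'a) \<Rightarrow> (nat \<Rightarrow> real) \<Rightarrow> nat \<Rightarrow> real" where
  "QF K xs a m = (\<Sum>i<m. \<Sum>j<m. a i * a j * K (xs i) (xs j))"

lemma kdelta_pd: "0 \<le> QF kdelta xs a m"
proof -
  let ?A = "{..<m::nat}"
  define S where "S v = (\<Sum>j\<in>{j\<in>?A. xs j = v}. a j)" for v
  have "QF kdelta xs a m = (\<Sum>i\<in>?A. a i * S (xs i))"
    unfolding QF_def S_def
  proof (rule sum.cong[OF refl])
    fix i assume "i \<in> ?A"
    have "(\<Sum>j<m. a i * a j * kdelta (xs i) (xs j)) = a i * (\<Sum>j\<in>?A. if xs j = xs i then a j else 0)"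
      by (simp add: kdelta_def sum_distrib_left) (intro sum.cong, auto)
    also have "(\<Sum>j\<in>?A. if xs j = xs i then a j else 0) = (\<Sum>j\<in>{j\<in>?A. xs j = xs i}. a j)"
      by (rule sum.inter_filter[symmetric]) simp
    finally show "(\<Sum>j<m. a i * a j * kdelta (xs i) (xs j)) = a i * (\<Sum>j\<in>{j\<in>?A. xs j = xs i}. a j)" .
  qed
  also have "\<dots> = (\<Sum>v\<in>xs ` ?A. \<Sum>i\<in>{i. i \<in> ?A \<and> xs i = v}. a i * S (xs i))"
    by (rule sum.image_gen) simp
  also have "\<dots> = (\<Sum>v\<in>xs ` ?A. S v * S v)"
    unfolding S_def by (intro sum.cong refl) (simp add: sum_distrib_right)
  also have "\<dots> \<ge> 0" by (intro sum_nonneg) simp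
  finally show ?thesis .
qed

lemma QF_scale: "QF K xs (\<lambda>i. c * a i) m = c\<^sup>2 * QF K xs a m"
  unfolding QF_def power2_eq_square by (simp add: sum_distrib_left ac_simps)

lemma QF_add: "QF (\<lambda>u v. K1 u v + K2 u v) xs a m = QF K1 xs a m + QF K2 xs a m"
  unfolding QF_def by (simp add: distrib_left sum.distrib)

lemma QF_cmul: "QF (\<lambda>u v. c * K u v) xs a m = c * QF K xs a m"
  unfolding QF_def by (simp add: sum_distrib_left ac_simps)

lemma QF_pd: "pd_kernel k \<Longrightarrow> 0 \<le> QF k xs a m"
  unfolding pd_kernel_def QF_def by blast

lemma test_values_in: "QF K xs a m \<le> 1 \<Longrightarrow> (\<Sum>i<m. a i * h (xs i))\<^sup>2 \<in> rkhs_test_values K h"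
  unfolding rkhs_test_values_def QF_def by blast

lemma test_values_0: "0 \<in> rkhs_test_values K h"
  using test_values_in[of K "\<lambda>_. undefined" "\<lambda>_. 0" 0 h] by (simp add: QF_def)

lemma rkhs_norm_nonneg: "in_rkhs K h \<Longrightarrow> rkhs_norm K h \<ge> 0"
  unfolding rkhs_norm_def in_rkhs_def using cSup_upper[OF test_values_0] by simp

lemma rkhs_bound:
  assumes rk: "in_rkhs K h" and q: "0 \<le> QF K xs a m"
  shows "(\<Sum>i<m. a i * h (xs i))\<^sup>2 \<le> (rkhs_norm K h)\<^sup>2 * QF K xs a m"
proof -
  define T where "T = rkhs_test_values K h"
  define S where "S = Sup T"
  define s where "s = (\<Sum>i<m. a i * h (xs i))"
  define qq where "qq = QF K xs a m"
  have bdd: "bdd_above T" using rk unfolding in_rkhs_def T_def .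
  have up: "t \<in> T \<Longrightarrow> t \<le> S" for t unfolding S_def using cSup_upper[OF _ bdd] by blast
  have S0: "0 \<le> S" using up test_values_0[of K h] unfolding T_def by blast
  have nrm: "(rkhs_norm K h)\<^sup>2 = S" unfolding rkhs_norm_def S_def[symmetric] T_def[symmetric]
    using S0 by (rule real_sqrt_pow2)
  have sc: "(\<Sum>i<m. (c * a i) * h (xs i)) = c * s" for c
    unfolding s_def by (simp add: sum_distrib_left mult.assoc)
  have key: "(c * s)\<^sup>2 \<le> S" if "c\<^sup>2 * qq \<le> 1" for c
  proof -
    have "QF K xs (\<lambda>i. c * a i) m \<le> 1" using that unfolding qq_def QF_scale .
    from test_values_in[OF this, of h] have "(c * s)\<^sup>2 \<in> T" unfolding sc T_def .
    then show ?thesis by (rule up)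
  qed
  show ?thesis
  proof (cases "qq > 0")
    case True
    define c where "c = 1 / sqrt qq"
    have c2: "c\<^sup>2 = 1 / qq" unfolding c_def using True by (simp add: power_divide)
    have "c\<^sup>2 * qq = 1" unfolding c2 using True by simp
    then have "(c * s)\<^sup>2 \<le> S" by (intro key) simp
    then have "s\<^sup>2 / qq \<le> S" unfolding power_mult_distrib c2 by simp
    then have "s\<^sup>2 \<le> S * qq" using True by (simp add: divide_le_eq)
    then show ?thesis unfolding nrm s_def qq_def by (simp add: mult.commute)
  next
    case False
    then have q0: "qq = 0" using q unfolding qq_def by simp
    have "s = 0"
    proof (rule ccontr)
      assume ne: "s \<noteq> 0"
      then have sp: "s\<^sup>2 > 0" by simp
      define c where "c = sqrt ((S + 1) / s\<^sup>2)"
      have c2: "c\<^sup>2 = (S + 1) / s\<^sup>2" unfolding c_def using S0 sp by simp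
      have "(c * s)\<^sup>2 \<le> S" by (intro key) (simp add: q0)
      moreover have "(c * s)\<^sup>2 = S + 1" unfolding power_mult_distrib c2 using sp by simp
      ultimately show False by simp
    qed
    then show ?thesis using q0 unfolding s_def qq_def by simp
  qed
qed

lemma sum_bound_abs:
  assumes "in_rkhs K h" "0 \<le> QF K xs a m"
  shows "\<bar>\<Sum>i<m. a i * h (xs i)\<bar> \<le> rkhs_norm K h * sqrt (QF K xs a m)"
proof -
  define s where "s = (\<Sum>i<m. a i * h (xs i))"
  define N where "N = rkhs_norm K h"
  define q where "q = QF K xs a m"
  have A: "s\<^sup>2 \<le> N\<^sup>2 * q" using rkhs_bound[OF assms] unfolding s_def N_def q_def .
  have N0: "N \<ge> 0" unfolding N_def using rkhs_norm_nonneg[OF assms(1)] .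
  have "\<bar>s\<bar> = sqrt (s\<^sup>2)" by simp
  also have "\<dots> \<le> sqrt (N\<^sup>2 * q)" using A by (rule real_sqrt_le_mono)
  also have "\<dots> = N * sqrt q" using N0 by (simp add: real_sqrt_mult)
  finally show ?thesis unfolding s_def N_def q_def .
qed

lemma ksig_pd:
  assumes "pd_kernel k"
  shows "0 \<le> QF (\<lambda>u v. k u v + \<sigma>\<^sup>2 * kdelta u v) xs a m"
  unfolding QF_add QF_cmul using QF_pd[OF assms] kdelta_pd[of xs a m]
  by (simp add: add_nonneg_nonneg)

lemma h_rkhs:
  assumes pd: "pd_kernel k" and f: "in_rkhs k f" and g: "in_rkhs (\<lambda>u v. \<sigma>\<^sup>2 * kdelta u v) g"
  shows "in_rkhs (\<lambda>u v. k u v + \<sigma>\<^sup>2 * kdelta u v) (\<lambda>z. f z + g z)"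
proof -
  let ?F = "rkhs_norm k f" and ?G = "rkhs_norm (\<lambda>u v. \<sigma>\<^sup>2 * kdelta u v) g"
  have "t \<le> (?F + ?G)\<^sup>2" if t: "t \<in> rkhs_test_values (\<lambda>u v. k u v + \<sigma>\<^sup>2 * kdelta u v) (\<lambda>z. f z + g z)" for t
  proof -
    obtain m xs a where tdef: "t = (\<Sum>i<m. a i * (f (xs i) + g (xs i)))\<^sup>2"
      and q: "QF (\<lambda>u v. k u v + \<sigma>\<^sup>2 * kdelta u v) xs a m \<le> 1"
      using t unfolding rkhs_test_values_def QF_def by blast
    have qk: "0 \<le> QF k xs a m" using QF_pd[OF pd] .
    have qg: "0 \<le> QF (\<lambda>u v. \<sigma>\<^sup>2 * kdelta u v) xs a m"
      unfolding QF_cmul using kdelta_pd[of xs a m] by simp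
    have qsum: "QF k xs a m + QF (\<lambda>u v. \<sigma>\<^sup>2 * kdelta u v) xs a m \<le> 1"
      using q unfolding QF_add .
    have "\<bar>\<Sum>i<m. a i * f (xs i)\<bar> \<le> ?F * sqrt (QF k xs a m)" using sum_bound_abs[OF f qk] .
    also have "\<dots> \<le> ?F" using qk qg qsum rkhs_norm_nonneg[OF f]
      by (intro mult_left_le[of _ ?F]) (auto simp: real_sqrt_le_1_iff)
    finally have 1: "\<bar>\<Sum>i<m. a i * f (xs i)\<bar> \<le> ?F" .
    have "\<bar>\<Sum>i<m. a i * g (xs i)\<bar> \<le> ?G * sqrt (QF (\<lambda>u v. \<sigma>\<^sup>2 * kdelta u v) xs a m)"
      using sum_bound_abs[OF g qg] .
    also have "\<dots> \<le> ?G" using qk qg qsum rkhs_norm_nonneg[OF g]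
      by (intro mult_left_le) auto
    finally have 2: "\<bar>\<Sum>i<m. a i * g (xs i)\<bar> \<le> ?G" .
    have e: "(\<Sum>i<m. a i * (f (xs i) + g (xs i))) = (\<Sum>i<m. a i * f (xs i)) + (\<Sum>i<m. a i * g (xs i))"
      by (simp add: distrib_left sum.distrib)
    have "\<bar>\<Sum>i<m. a i * (f (xs i) + g (xs i))\<bar> \<le> ?F + ?G" unfolding e using 1 2 by linarith
    then show ?thesis unfolding tdef using rkhs_norm_nonneg[OF f] rkhs_norm_nonneg[OF g]
      by (simp add: power2_le_iff_abs_le)
  qed
  then show ?thesis unfolding in_rkhs_def bdd_above_def by blast
qed

lemma g_bound:
  assumes g: "in_rkhs (\<lambda>u v. \<sigma>\<^sup>2 * kdelta u v) g" and s: "\<sigma> > 0"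
  shows "\<bar>g z\<bar> \<le> rkhs_norm (\<lambda>u v. \<sigma>\<^sup>2 * kdelta u v) g * \<sigma>"
proof -
  have q: "QF (\<lambda>u v. \<sigma>\<^sup>2 * kdelta u v) (\<lambda>_. z) (\<lambda>_. 1) 1 = \<sigma>\<^sup>2"
    by (simp add: QF_def kdelta_def)
  show ?thesis using sum_bound_abs[OF g, of "\<lambda>_. z" "\<lambda>_. 1" 1] q s by simp
qed

definition ones :: "nat \<Rightarrow> real vec" where "ones n = vec n (\<lambda>_. 1)"

lemma ones_carrier[simp]: "ones n \<in> carrier_vec n" by (simp add: ones_def)

lemma kmat_mult_carrier[simp]: "v \<in> carrier_vec (length Q) \<Longrightarrow> kmat K P Q *\<^sub>v v \<in> carrier_vec (length P)"
  by (rule mult_mat_vec_carrier[OF kmat_carrier])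

lemma mat_total_vec: "B \<in> carrier_mat n m \<Longrightarrow> mat_total B = ones n \<bullet> (B *\<^sub>v ones m)"
  unfolding mat_total_def scalar_prod_def mult_mat_vec_def row_def ones_def
  by (simp add: atLeast0LessThan)

lemma kmat_append: "kmat K (P @ Q) (P @ Q) =
   four_block_mat (kmat K P P) (kmat K P Q) (kmat K Q P) (kmat K Q Q)"
  by (intro eq_matI) (auto simp: kmat_def nth_append)

lemma bil_swap:
  assumes sym: "\<And>x y. K x y = K y x"
    and u: "u \<in> carrier_vec (length P)" and w: "w \<in> carrier_vec (length Q)"
  shows "u \<bullet> (kmat K P Q *\<^sub>v w) = w \<bullet> (kmat K Q P *\<^sub>v u)"
  unfolding bil_vec[OF u w] bil_vec[OF w u]
  by (subst sum.swap) (simp add: ac_simps sym)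

lemma qf_block:
  assumes sym: "\<And>x y. K x y = K y x"
    and u: "u \<in> carrier_vec (length P)" and w: "w \<in> carrier_vec (length Q)"
  shows "(u @\<^sub>v w) \<bullet> (kmat K (P @ Q) (P @ Q) *\<^sub>v (u @\<^sub>v w)) =
     u \<bullet> (kmat K P P *\<^sub>v u) + 2 * (w \<bullet> (kmat K Q P *\<^sub>v u)) + w \<bullet> (kmat K Q Q *\<^sub>v w)"
proof -
  let ?p = "length P" and ?q = "length Q"
  have "kmat K (P @ Q) (P @ Q) *\<^sub>v (u @\<^sub>v w) =
     (kmat K P P *\<^sub>v u + kmat K P Q *\<^sub>v w) @\<^sub>v (kmat K Q P *\<^sub>v u + kmat K Q Q *\<^sub>v w)"
    unfolding kmat_append by (rule four_block_mat_mult_vec) (use u w in auto)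
  then have "(u @\<^sub>v w) \<bullet> (kmat K (P @ Q) (P @ Q) *\<^sub>v (u @\<^sub>v w)) =
     u \<bullet> (kmat K P P *\<^sub>v u + kmat K P Q *\<^sub>v w) + w \<bullet> (kmat K Q P *\<^sub>v u + kmat K Q Q *\<^sub>v w)"
    by (simp add: scalar_prod_append[of _ ?p _ ?q] u w
        add_carrier_vec mult_mat_vec_carrier[OF kmat_carrier])
  also have "\<dots> = u \<bullet> (kmat K P P *\<^sub>v u) + u \<bullet> (kmat K P Q *\<^sub>v w) + (w \<bullet> (kmat K Q P *\<^sub>v u) + w \<bullet> (kmat K Q Q *\<^sub>v w))"
    by (simp add: scalar_prod_add_distrib[of _ ?p] scalar_prod_add_distrib[of _ ?q] u w
        mult_mat_vec_carrier[OF kmat_carrier])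
  also have "u \<bullet> (kmat K P Q *\<^sub>v w) = w \<bullet> (kmat K Q P *\<^sub>v u)" by (rule bil_swap[OF sym u w])
  finally show ?thesis by simp
qed

lemma lin_vec: "(\<Sum>i<length P. a $ i * h (P ! i)) = a \<bullet> vec (length P) (\<lambda>i. h (P ! i))"
  unfolding scalar_prod_def by (simp add: atLeast0LessThan)

lemma vec_append_list: "vec (length (P @ Q)) (\<lambda>i. h ((P @ Q) ! i)) =
    vec (length P) (\<lambda>i. h (P ! i)) @\<^sub>v vec (length Q) (\<lambda>i. h (Q ! i))"
  by (intro eq_vecI) (auto simp: nth_append)

lemma total_post_cov:
  assumes pd: "pd_kernel k" and s: "\<sigma> > 0"
  shows "mat_total (post_cov k \<sigma> Xb Z) = ones (length Z) \<bullet> (kmat k Z Z *\<^sub>v ones (length Z))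
     - (kmat k Xb Z *\<^sub>v ones (length Z)) \<bullet> (reg_inv k \<sigma> Xb *\<^sub>v (kmat k Xb Z *\<^sub>v ones (length Z)))"
proof -
  let ?t = "length Xb" and ?L = "length Z"
  let ?R = "reg_inv k \<sigma> Xb" and ?A = "kmat k Xb Z" and ?o = "ones (length Z)"
  let ?v = "?A *\<^sub>v ?o"
  note P = reg_inv_props[OF pd s, of Xb]
  have Rc: "?R \<in> carrier_mat ?t ?t" using P(1) .
  have Ac: "?A \<in> carrier_mat ?t ?L" by simp
  have vc: "?v \<in> carrier_vec ?t" by simp
  have Rvc: "?R *\<^sub>v ?v \<in> carrier_vec ?t" using Rc vc by simp
  have At0: "transpose_mat ?A \<in> carrier_mat ?L ?t" by simp
  have ATc: "transpose_mat ?A *\<^sub>v (?R *\<^sub>v ?v) \<in> carrier_vec ?L" using mult_mat_vec_carrier[OF At0 Rvc] .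
  have Pc: "transpose_mat ?A * ?R * ?A \<in> carrier_mat ?L ?L" using mult_carrier_mat[OF mult_carrier_mat[OF _ Rc] Ac] by simp
  have "mat_total (post_cov k \<sigma> Xb Z) = ?o \<bullet> ((kmat k Z Z - transpose_mat ?A * ?R * ?A) *\<^sub>v ?o)"
    unfolding post_cov_def using minus_carrier_mat[OF Pc] by (intro mat_total_vec)
  also have "(kmat k Z Z - transpose_mat ?A * ?R * ?A) *\<^sub>v ?o = kmat k Z Z *\<^sub>v ?o - (transpose_mat ?A * ?R * ?A) *\<^sub>v ?o"
    using Pc by (intro minus_mult_distrib_mat_vec[of _ ?L ?L]) auto
  also have "(transpose_mat ?A * ?R * ?A) *\<^sub>v ?o = transpose_mat ?A *\<^sub>v (?R *\<^sub>v ?v)"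
  proof -
    have At: "transpose_mat ?A \<in> carrier_mat ?L ?t" by simp
    have "(transpose_mat ?A * ?R * ?A) *\<^sub>v ?o = (transpose_mat ?A * ?R) *\<^sub>v (?A *\<^sub>v ?o)"
      by (rule assoc_mult_mat_vec[OF mult_carrier_mat[OF At Rc] Ac ones_carrier])
    also have "\<dots> = transpose_mat ?A *\<^sub>v (?R *\<^sub>v ?v)"
      by (rule assoc_mult_mat_vec[OF At Rc]) simp
    finally show ?thesis .
  qed
  also have "?o \<bullet> (kmat k Z Z *\<^sub>v ?o - transpose_mat ?A *\<^sub>v (?R *\<^sub>v ?v)) =
      ?o \<bullet> (kmat k Z Z *\<^sub>v ?o) - ?o \<bullet> (transpose_mat ?A *\<^sub>v (?R *\<^sub>v ?v))"
    using ATc by (intro scalar_prod_minus_distrib[of _ ?L]) auto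
  also have "?o \<bullet> (transpose_mat ?A *\<^sub>v (?R *\<^sub>v ?v)) = (transpose_mat ?A *\<^sub>v (?R *\<^sub>v ?v)) \<bullet> ?o"
    using ATc by (intro comm_scalar_prod[of _ ?L]) auto
  also have "\<dots> = (?R *\<^sub>v ?v) \<bullet> ?v"
    using Rvc by (intro transpose_vec_mult_scalar[OF Ac]) auto
  also have "\<dots> = ?v \<bullet> (?R *\<^sub>v ?v)"
    using Rvc vc by (intro comm_scalar_prod[of _ ?t])
  finally show ?thesis .
qed


lemma mult_mat_vec_smult: "(A :: real mat) \<in> carrier_mat nr nc \<Longrightarrow> v \<in> carrier_vec nc \<Longrightarrow>
   A *\<^sub>v (c \<cdot>\<^sub>v v) = c \<cdot>\<^sub>v (A *\<^sub>v v)"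
  by (intro eq_vecI) (auto simp: scalar_prod_smult_right)

lemma M_R:
  assumes pd: "pd_kernel k" and s: "\<sigma> > 0" and v: "v \<in> carrier_vec (length Xb)"
  shows "Mreg k \<sigma> Xb *\<^sub>v (reg_inv k \<sigma> Xb *\<^sub>v v) = v"
proof -
  note P = reg_inv_props[OF pd s, of Xb]
  have "Mreg k \<sigma> Xb *\<^sub>v (reg_inv k \<sigma> Xb *\<^sub>v v) = (Mreg k \<sigma> Xb * reg_inv k \<sigma> Xb) *\<^sub>v v"
    using P(1) v by (simp add: assoc_mult_mat_vec[of _ "length Xb" "length Xb" _ "length Xb"])
  then show ?thesis using P(2) v by simp
qed

lemma R_swap:
  assumes pd: "pd_kernel k" and s: "\<sigma> > 0"
    and v: "v \<in> carrier_vec (length Xb)" and y: "y \<in> carrier_vec (length Xb)"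
  shows "(reg_inv k \<sigma> Xb *\<^sub>v v) \<bullet> y = v \<bullet> (reg_inv k \<sigma> Xb *\<^sub>v y)"
  using transpose_vec_mult_scalar[OF reg_inv_props(1)[OF pd s, of Xb] y v] reg_inv_sym[OF pd s, of Xb]
  by simp

lemma Mreg_sprod:
  assumes v: "w \<in> carrier_vec (length Xb)"
  shows "w \<bullet> (Mreg k \<sigma> Xb *\<^sub>v w) = \<sigma>\<^sup>2 * (w \<bullet> w) + w \<bullet> (kmat k Xb Xb *\<^sub>v w)"
proof -
  have "w \<bullet> (\<sigma>\<^sup>2 \<cdot>\<^sub>v w + kmat k Xb Xb *\<^sub>v w) = w \<bullet> (\<sigma>\<^sup>2 \<cdot>\<^sub>v w) + w \<bullet> (kmat k Xb Xb *\<^sub>v w)"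
    by (rule scalar_prod_add_distrib[of _ "length Xb"]) (use v in auto)
  then show ?thesis using v by (simp add: Mreg_mult)
qed

lemma pd_total:
  assumes pd: "pd_kernel k" and s: "\<sigma> > 0"
  shows "\<sigma>\<^sup>2 * ((reg_inv k \<sigma> Xb *\<^sub>v (kmat k Xb Z *\<^sub>v ones (length Z))) \<bullet>
                 (reg_inv k \<sigma> Xb *\<^sub>v (kmat k Xb Z *\<^sub>v ones (length Z))))
         \<le> mat_total (post_cov k \<sigma> Xb Z)"
proof -
  let ?t = "length Xb" and ?L = "length Z"
  let ?R = "reg_inv k \<sigma> Xb" and ?A = "kmat k Xb Z" and ?o = "ones (length Z)"
  define v where "v = ?A *\<^sub>v ?o"
  define w where "w = ?R *\<^sub>v v"
  define aw where "aw = (-1) \<cdot>\<^sub>v w"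
  note P = reg_inv_props[OF pd s, of Xb]
  have sym: "\<And>x y. k x y = k y x" using pd unfolding pd_kernel_def by blast
  have vc: "v \<in> carrier_vec ?t" unfolding v_def by simp
  have wc: "w \<in> carrier_vec ?t" unfolding w_def using P(1) vc by simp
  have awc: "aw \<in> carrier_vec ?t" unfolding aw_def using wc by simp
  have ac: "?o @\<^sub>v aw \<in> carrier_vec (length (Z @ Xb))" using awc by simp
  have "0 \<le> (?o @\<^sub>v aw) \<bullet> (kmat k (Z @ Xb) (Z @ Xb) *\<^sub>v (?o @\<^sub>v aw))"
    by (rule pd_vec[OF pd ac])
  also have "\<dots> = ?o \<bullet> (kmat k Z Z *\<^sub>v ?o) + 2 * (aw \<bullet> v) + aw \<bullet> (kmat k Xb Xb *\<^sub>v aw)"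
    unfolding v_def by (rule qf_block[OF sym]) (use awc in auto)
  also have "aw \<bullet> v = - (w \<bullet> v)" unfolding aw_def using wc vc by simp
  also have "aw \<bullet> (kmat k Xb Xb *\<^sub>v aw) = w \<bullet> (kmat k Xb Xb *\<^sub>v w)"
    unfolding aw_def using wc by (simp add: mult_mat_vec_smult[of _ ?t ?t])
  also have "w \<bullet> (kmat k Xb Xb *\<^sub>v w) = w \<bullet> v - \<sigma>\<^sup>2 * (w \<bullet> w)"
    using Mreg_sprod[OF wc, of k \<sigma>] M_R[OF pd s vc] unfolding w_def by simp
  also have "w \<bullet> v = v \<bullet> w" using comm_scalar_prod[OF wc vc] .
  finally have "0 \<le> ?o \<bullet> (kmat k Z Z *\<^sub>v ?o) - v \<bullet> w - \<sigma>\<^sup>2 * (w \<bullet> w)" by simp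
  then show ?thesis unfolding total_post_cov[OF pd s] w_def v_def by simp
qed

lemma sum_pm:
  assumes sym: "\<And>x y. k x y = k y x" and al: "al \<in> carrier_vec (length Xb)"
  shows "(\<Sum>i<length Z. vec (length Xb) (\<lambda>j. k (Z!i) (Xb!j)) \<bullet> al) =
     (kmat k Xb Z *\<^sub>v ones (length Z)) \<bullet> al"
  using al
  unfolding scalar_prod_def mult_mat_vec_def row_def ones_def kmat_def
  by (simp add: atLeast0LessThan sum_distrib_right)
     (subst sum.swap, simp add: sym)

lemma sum_post_mean:
  assumes pd: "pd_kernel k" and s: "\<sigma> > 0"
  shows "(\<Sum>i<length Z. post_mean k \<sigma> h Xb (Z!i)) =
     (kmat k Xb Z *\<^sub>v ones (length Z)) \<bullet> (reg_inv k \<sigma> Xb *\<^sub>v vec_of_list (map h Xb))"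
proof -
  have sym: "\<And>x y. k x y = k y x" using pd unfolding pd_kernel_def by blast
  have "reg_inv k \<sigma> Xb *\<^sub>v vec_of_list (map h Xb) \<in> carrier_vec (length Xb)"
  proof -
    have "vec_of_list (map h Xb) \<in> carrier_vec (length Xb)"
      by (simp only: carrier_vec_def dim_vec_of_list length_map mem_Collect_eq)
    then show ?thesis using mult_mat_vec_carrier[OF reg_inv_props(1)[OF pd s, of Xb]] by blast
  qed
  then show ?thesis unfolding post_mean_def by (rule sum_pm[OF sym])
qed

lemma kmat_ksig_same:
  assumes "distinct P"
  shows "kmat (\<lambda>u v. k u v + \<sigma>\<^sup>2 * kdelta u v) P P = Mreg k \<sigma> P"
  unfolding Mreg_def using assms
  by (intro eq_matI) (auto simp: kmat_def kdelta_def nth_eq_iff_index_eq)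

lemma kmat_ksig_disj:
  assumes "set P \<inter> set Q = {}"
  shows "kmat (\<lambda>u v. k u v + \<sigma>\<^sup>2 * kdelta u v) P Q = kmat k P Q"
  using assms
  by (intro eq_matI) (auto simp: kmat_def kdelta_def dest: nth_mem)

abbreviation ksig where "ksig k \<sigma> \<equiv> (\<lambda>u v. k u v + \<sigma>\<^sup>2 * kdelta u v)"

definition kv :: "('a \<Rightarrow> 'a \<Rightarrow> real) \<Rightarrow> 'a list \<Rightarrow> 'a \<Rightarrow> real vec" where
  "kv k Xb z = vec (length Xb) (\<lambda>i. k (Xb ! i) z)"

lemma kv_carrier[simp]: "kv k Xb z \<in> carrier_vec (length Xb)" by (simp add: kv_def)

lemma y_vec: "vec_of_list (map h Xb) = vec (length Xb) (\<lambda>i. h (Xb ! i))"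
  by (intro eq_vecI) (simp_all add: vec_of_list_index)

lemma post_cov_entry:
  assumes pd: "pd_kernel k" and s: "\<sigma> > 0" and p: "p < length Z" and q: "q < length Z"
  shows "post_cov k \<sigma> Xb Z $$ (p, q) = k (Z!p) (Z!q) - kv k Xb (Z!p) \<bullet> (reg_inv k \<sigma> Xb *\<^sub>v kv k Xb (Z!q))"
proof -
  let ?t = "length Xb" and ?L = "length Z"
  let ?R = "reg_inv k \<sigma> Xb" and ?A = "kmat k Xb Z"
  have Rc: "?R \<in> carrier_mat ?t ?t" using reg_inv_props(1)[OF pd s] .
  have Ac: "?A \<in> carrier_mat ?t ?L" by simp
  have At: "transpose_mat ?A \<in> carrier_mat ?L ?t" by simp
  have ATR: "transpose_mat ?A * ?R \<in> carrier_mat ?L ?t" using mult_carrier_mat[OF At Rc] .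
  have colA: "col ?A j = kv k Xb (Z!j)" if "j < ?L" for j
    using that by (intro eq_vecI) (auto simp: kv_def kmat_def)
  have rowR: "row ?R j = col ?R j" if "j < ?t" for j
  proof -
    have "row ?R j = row (transpose_mat ?R) j" using reg_inv_sym[OF pd s] by simp
    also have "\<dots> = col ?R j" using that Rc by simp
    finally show ?thesis .
  qed
  have r: "row (transpose_mat ?A * ?R) p = ?R *\<^sub>v kv k Xb (Z!p)"
  proof -
    have "row (transpose_mat ?A * ?R) p = vec ?t (\<lambda>j. row (transpose_mat ?A) p \<bullet> col ?R j)"
      by (rule row_mult[OF At Rc p])
    also have "row (transpose_mat ?A) p = kv k Xb (Z!p)" using p colA by simp
    also have "vec ?t (\<lambda>j. kv k Xb (Z!p) \<bullet> col ?R j) = ?R *\<^sub>v kv k Xb (Z!p)"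
    proof (intro eq_vecI)
      fix j assume "j < dim_vec (?R *\<^sub>v kv k Xb (Z!p))"
      then have j: "j < ?t" using Rc by simp
      have "kv k Xb (Z!p) \<bullet> col ?R j = col ?R j \<bullet> kv k Xb (Z!p)"
        using Rc j by (intro comm_scalar_prod[of _ ?t]) auto
      then show "vec ?t (\<lambda>j. kv k Xb (Z!p) \<bullet> col ?R j) $ j = (?R *\<^sub>v kv k Xb (Z!p)) $ j"
        using j Rc rowR[OF j] by simp
    qed (use Rc in simp)
    finally show ?thesis .
  qed
  have "(transpose_mat ?A * ?R * ?A) $$ (p, q) = row (transpose_mat ?A * ?R) p \<bullet> col ?A q"
    using ATR Ac p q by simp
  also have "\<dots> = (?R *\<^sub>v kv k Xb (Z!p)) \<bullet> kv k Xb (Z!q)" using r colA[OF q] by simp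
  also have "\<dots> = kv k Xb (Z!p) \<bullet> (?R *\<^sub>v kv k Xb (Z!q))" by (rule R_swap[OF pd s]) auto
  finally have e: "(transpose_mat ?A * ?R * ?A) $$ (p, q) = kv k Xb (Z!p) \<bullet> (?R *\<^sub>v kv k Xb (Z!q))" .
  have "post_cov k \<sigma> Xb Z $$ (p, q) = kmat k Z Z $$ (p,q) - (transpose_mat ?A * ?R * ?A) $$ (p, q)"
    unfolding post_cov_def using mult_carrier_mat[OF ATR Ac] p q by simp
  then show ?thesis using e p q by simp
qed

lemma batch_bound:
  assumes pd: "pd_kernel k" and s: "\<sigma> > 0" and hr: "in_rkhs (ksig k \<sigma>) h"
    and dZ: "distinct Z" and dX: "distinct Xb" and disj: "set Xb \<inter> set Z = {}"
  shows "((\<Sum>i<length Z. h (Z!i)) - (\<Sum>i<length Z. post_mean k \<sigma> h Xb (Z!i)))\<^sup>2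
     \<le> (rkhs_norm (ksig k \<sigma>) h)\<^sup>2 * (mat_total (post_cov k \<sigma> Xb Z) + real (length Z) * \<sigma>\<^sup>2)"
proof -
  let ?t = "length Xb" and ?L = "length Z"
  let ?R = "reg_inv k \<sigma> Xb" and ?A = "kmat k Xb Z" and ?o = "ones (length Z)"
  let ?P = "Z @ Xb"
  define y where "y = vec ?t (\<lambda>i. h (Xb ! i))"
  define v where "v = ?A *\<^sub>v ?o"
  define w where "w = ?R *\<^sub>v v"
  define aw where "aw = (-1) \<cdot>\<^sub>v w"
  define a where "a = ?o @\<^sub>v aw"
  note P = reg_inv_props[OF pd s, of Xb]
  have sym: "\<And>x y. ksig k \<sigma> x y = ksig k \<sigma> y x" using pd unfolding pd_kernel_def kdelta_def by auto
  have yc: "y \<in> carrier_vec ?t" unfolding y_def by simp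
  have vc: "v \<in> carrier_vec ?t" unfolding v_def by simp
  have wc: "w \<in> carrier_vec ?t" unfolding w_def using P(1) vc by simp
  have awc: "aw \<in> carrier_vec ?t" unfolding aw_def using wc by simp
  have ac: "a \<in> carrier_vec (length ?P)" unfolding a_def using awc by simp
  have qf: "QF (ksig k \<sigma>) (\<lambda>i. ?P ! i) (\<lambda>i. a $ i) (length ?P) = a \<bullet> (kmat (ksig k \<sigma>) ?P ?P *\<^sub>v a)"
    unfolding QF_def qf_vec[OF ac] ..
  have q0: "0 \<le> QF (ksig k \<sigma>) (\<lambda>i. ?P ! i) (\<lambda>i. a $ i) (length ?P)"
    by (rule ksig_pd[OF pd])
  have oo: "?o \<bullet> ?o = real ?L" unfolding ones_def scalar_prod_def by simp
  have "a \<bullet> (kmat (ksig k \<sigma>) ?P ?P *\<^sub>v a) = ?o \<bullet> (kmat (ksig k \<sigma>) Z Z *\<^sub>v ?o)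
      + 2 * (aw \<bullet> (kmat (ksig k \<sigma>) Xb Z *\<^sub>v ?o)) + aw \<bullet> (kmat (ksig k \<sigma>) Xb Xb *\<^sub>v aw)"
    unfolding a_def by (rule qf_block[OF sym]) (use awc in auto)
  also have "kmat (ksig k \<sigma>) Z Z = Mreg k \<sigma> Z" by (rule kmat_ksig_same[OF dZ])
  also have "kmat (ksig k \<sigma>) Xb Xb = Mreg k \<sigma> Xb" by (rule kmat_ksig_same[OF dX])
  also have "kmat (ksig k \<sigma>) Xb Z = ?A" by (rule kmat_ksig_disj[OF disj])
  also have "?o \<bullet> (Mreg k \<sigma> Z *\<^sub>v ?o) = \<sigma>\<^sup>2 * real ?L + ?o \<bullet> (kmat k Z Z *\<^sub>v ?o)"
    using Mreg_sprod[OF ones_carrier, where k=k and \<sigma>=\<sigma> and Xb=Z] oo by simp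
  also have "aw \<bullet> (?A *\<^sub>v ?o) = - (w \<bullet> v)" unfolding aw_def v_def using wc by simp
  also have "aw \<bullet> (Mreg k \<sigma> Xb *\<^sub>v aw) = w \<bullet> v"
    unfolding aw_def using wc[unfolded w_def] vc M_R[OF pd s vc]
    by (simp add: mult_mat_vec_smult[of _ ?t ?t] w_def carrier_vecD)
  also have "w \<bullet> v = v \<bullet> w" using comm_scalar_prod[OF wc vc] .
  finally have Q: "a \<bullet> (kmat (ksig k \<sigma>) ?P ?P *\<^sub>v a) = mat_total (post_cov k \<sigma> Xb Z) + real ?L * \<sigma>\<^sup>2"
    unfolding total_post_cov[OF pd s] v_def w_def by simp
  have "(\<Sum>i<length ?P. a $ i * h (?P ! i)) = a \<bullet> vec (length ?P) (\<lambda>i. h (?P ! i))"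
    by (rule lin_vec)
  also have "\<dots> = ?o \<bullet> vec ?L (\<lambda>i. h (Z ! i)) + aw \<bullet> y"
    unfolding vec_append_list a_def y_def using awc by (intro scalar_prod_append) auto
  also have "?o \<bullet> vec ?L (\<lambda>i. h (Z ! i)) = (\<Sum>i<?L. h (Z!i))"
    unfolding ones_def scalar_prod_def by (simp add: atLeast0LessThan)
  also have "aw \<bullet> y = - (w \<bullet> y)" unfolding aw_def using wc yc by simp
  also have "w \<bullet> y = v \<bullet> (?R *\<^sub>v y)" unfolding w_def by (rule R_swap[OF pd s vc yc])
  also have "\<dots> = (\<Sum>i<length Z. post_mean k \<sigma> h Xb (Z!i))"
    unfolding sum_post_mean[OF pd s] v_def y_def y_vec ..
  finally have L: "(\<Sum>i<length ?P. a $ i * h (?P ! i)) =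
      (\<Sum>i<?L. h (Z!i)) - (\<Sum>i<length Z. post_mean k \<sigma> h Xb (Z!i))" by simp
  from rkhs_bound[OF hr q0] show ?thesis unfolding L qf Q .
qed

lemma post_cov_carrier:
  assumes pd: "pd_kernel k" and s: "\<sigma> > 0"
  shows "post_cov k \<sigma> Xb Z \<in> carrier_mat (length Z) (length Z)"
proof -
  have Rc: "reg_inv k \<sigma> Xb \<in> carrier_mat (length Xb) (length Xb)" using reg_inv_props(1)[OF pd s] .
  have At: "transpose_mat (kmat k Xb Z) \<in> carrier_mat (length Z) (length Xb)" by simp
  show ?thesis unfolding post_cov_def
    using minus_carrier_mat[OF mult_carrier_mat[OF mult_carrier_mat[OF At Rc] kmat_carrier]] .
qed

definition c0 :: "('a \<Rightarrow> 'a \<Rightarrow> real) \<Rightarrow> real \<Rightarrow> 'a list \<Rightarrow> 'a \<Rightarrow> real" where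
  "c0 k \<sigma> Xb z = k z z - kv k Xb z \<bullet> (reg_inv k \<sigma> Xb *\<^sub>v kv k Xb z)"

lemma rep_trace:
  assumes pd: "pd_kernel k" and s: "\<sigma> > 0"
  shows "mat_trace (post_cov k \<sigma> Xb (replicate L z)) = real L * c0 k \<sigma> Xb z"
proof -
  have "mat_trace (post_cov k \<sigma> Xb (replicate L z)) = (\<Sum>i<L. c0 k \<sigma> Xb z)"
    unfolding mat_trace_def using post_cov_carrier[OF pd s, of Xb "replicate L z"]
    by (intro sum.cong) (auto simp: post_cov_entry[OF pd s] c0_def)
  then show ?thesis by simp
qed

lemma rep_total:
  assumes pd: "pd_kernel k" and s: "\<sigma> > 0"
  shows "mat_total (post_cov k \<sigma> Xb (replicate L z)) = (real L)\<^sup>2 * c0 k \<sigma> Xb z"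
proof -
  have "mat_total (post_cov k \<sigma> Xb (replicate L z)) = (\<Sum>i<L. \<Sum>j<L. c0 k \<sigma> Xb z)"
    unfolding mat_total_def using post_cov_carrier[OF pd s, of Xb "replicate L z"]
    by (intro sum.cong) (auto simp: post_cov_entry[OF pd s] c0_def)
  then show ?thesis by (simp add: power2_eq_square)
qed

lemma c0_nonneg:
  assumes pd: "pd_kernel k" and s: "\<sigma> > 0"
  shows "0 \<le> c0 k \<sigma> Xb z"
proof -
  have "mat_total (post_cov k \<sigma> Xb [z]) = c0 k \<sigma> Xb z"
    using rep_total[OF pd s, of Xb 1 z] by simp
  moreover have "0 \<le> mat_total (post_cov k \<sigma> Xb [z])"
    using pd_total[OF pd s, of Xb "[z]"] self_sprod_nonneg
    by (smt (verit, ccfv_threshold) mult_nonneg_nonneg zero_le_power2)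
  ultimately show ?thesis by simp
qed

lemma sq_le_imp:
  fixes d B X :: real
  assumes "d\<^sup>2 \<le> B\<^sup>2 * X" "0 \<le> B" "0 \<le> X"
  shows "d \<le> B * sqrt X"
proof -
  have "d \<le> sqrt (d\<^sup>2)" by simp
  also have "\<dots> \<le> sqrt (B\<^sup>2 * X)" using assms(1) by (rule real_sqrt_le_mono)
  also have "\<dots> = B * sqrt X" using assms(2) by (simp add: real_sqrt_mult)
  finally show ?thesis .
qed

lemma xstar_bound:
  assumes pd: "pd_kernel k" and s: "\<sigma> > 0" and hr: "in_rkhs (ksig k \<sigma>) h" and dX: "distinct Xb"
  shows "h z \<le> post_mean k \<sigma> h Xb z + rkhs_norm (ksig k \<sigma>) h * (sqrt (c0 k \<sigma> Xb z) + \<sigma>)"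
proof -
  let ?B = "rkhs_norm (ksig k \<sigma>) h"
  let ?t = "length Xb"
  let ?R = "reg_inv k \<sigma> Xb"
  have B0: "0 \<le> ?B" by (rule rkhs_norm_nonneg[OF hr])
  have c0: "0 \<le> c0 k \<sigma> Xb z" by (rule c0_nonneg[OF pd s])
  show ?thesis
  proof (cases "z \<in> set Xb")
    case False
    have "((\<Sum>i<length [z]. h ([z]!i)) - (\<Sum>i<length [z]. post_mean k \<sigma> h Xb ([z]!i)))\<^sup>2
     \<le> ?B\<^sup>2 * (mat_total (post_cov k \<sigma> Xb [z]) + real (length [z]) * \<sigma>\<^sup>2)"
      using False by (intro batch_bound[OF pd s hr _ dX]) auto
    moreover have "mat_total (post_cov k \<sigma> Xb [z]) = c0 k \<sigma> Xb z"
      using rep_total[OF pd s, of Xb 1 z] by simp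
    ultimately have "(h z - post_mean k \<sigma> h Xb z)\<^sup>2 \<le> ?B\<^sup>2 * (c0 k \<sigma> Xb z + \<sigma>\<^sup>2)" by simp
    then have "h z - post_mean k \<sigma> h Xb z \<le> ?B * sqrt (c0 k \<sigma> Xb z + \<sigma>\<^sup>2)"
      using B0 c0 by (intro sq_le_imp) auto
    also have "\<dots> \<le> ?B * (sqrt (c0 k \<sigma> Xb z) + \<sigma>)"
    proof -
      have "sqrt (c0 k \<sigma> Xb z + \<sigma>\<^sup>2) \<le> sqrt (c0 k \<sigma> Xb z) + sqrt (\<sigma>\<^sup>2)"
        using c0 by (intro sqrt_add_le_add_sqrt) auto
      then show ?thesis using s B0 by (intro mult_left_mono) auto
    qed
    finally show ?thesis by simp
  next
    case True
    then obtain j where j: "j < ?t" "z = Xb ! j" by (auto simp: in_set_conv_nth)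
    define y where "y = vec ?t (\<lambda>i. h (Xb ! i))"
    define al where "al = ?R *\<^sub>v y"
    note P = reg_inv_props[OF pd s, of Xb]
    have yc: "y \<in> carrier_vec ?t" unfolding y_def by simp
    have alc: "al \<in> carrier_vec ?t" unfolding al_def using P(1) yc by simp
    have Mal: "Mreg k \<sigma> Xb *\<^sub>v al = y" unfolding al_def by (rule M_R[OF pd s yc])
    define p where "p = al \<bullet> y"
    have q0: "0 \<le> QF (ksig k \<sigma>) (\<lambda>i. Xb ! i) (\<lambda>i. al $ i) ?t" by (rule ksig_pd[OF pd])
    have qf: "QF (ksig k \<sigma>) (\<lambda>i. Xb ! i) (\<lambda>i. al $ i) ?t = p"
    proof -
      have "QF (ksig k \<sigma>) (\<lambda>i. Xb ! i) (\<lambda>i. al $ i) ?t = al \<bullet> (kmat (ksig k \<sigma>) Xb Xb *\<^sub>v al)"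
        unfolding QF_def qf_vec[OF alc] ..
      also have "\<dots> = p" unfolding kmat_ksig_same[OF dX] Mal p_def ..
      finally show ?thesis .
    qed
    have lin: "(\<Sum>i<?t. al $ i * h (Xb ! i)) = p" unfolding lin_vec p_def y_def ..
    have pB: "p\<^sup>2 \<le> ?B\<^sup>2 * p" using rkhs_bound[OF hr q0] unfolding qf lin .
    have ps: "\<sigma>\<^sup>2 * (al \<bullet> al) \<le> p" using Mreg_qf[OF pd alc, of \<sigma>] unfolding Mal p_def .
    have aj: "(al $ j)\<^sup>2 \<le> al \<bullet> al"
    proof -
      have "al $ j * al $ j \<le> (\<Sum>i\<in>{0..<?t}. al $ i * al $ i)"
        by (rule member_le_sum) (use j in auto)
      then show ?thesis using alc unfolding scalar_prod_def by (simp add: power2_eq_square)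
    qed
    have sa: "\<sigma>\<^sup>2 * (al $ j)\<^sup>2 \<le> p" using aj ps s
      by (smt (verit) mult_left_mono zero_le_power2)
    have "\<sigma>\<^sup>2 * (al $ j)\<^sup>2 \<le> ?B\<^sup>2"
    proof (cases "p > 0")
      case True
      then have "p \<le> ?B\<^sup>2" using pB by (simp add: power2_eq_square)
      then show ?thesis using sa by simp
    next
      case False
      then show ?thesis using sa by (smt (verit) zero_le_power2)
    qed
    then have "(\<sigma> * al $ j)\<^sup>2 \<le> ?B\<^sup>2 * 1" by (simp add: power_mult_distrib)
    then have sB: "\<sigma> * al $ j \<le> ?B" using sq_le_imp[of "\<sigma> * al $ j" ?B 1] B0 by simp
    have rowK: "row (kmat k Xb Xb) j = vec ?t (\<lambda>i. k z (Xb ! i))"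
      using j by (intro eq_vecI) (auto simp: kmat_def)
    have pm: "post_mean k \<sigma> h Xb z = (kmat k Xb Xb *\<^sub>v al) $ j"
      unfolding post_mean_def y_vec using j rowK by (simp add: al_def y_def)
    have "h z = y $ j" unfolding y_def using j by simp
    also have "\<dots> = (\<sigma>\<^sup>2 \<cdot>\<^sub>v al + kmat k Xb Xb *\<^sub>v al) $ j" using Mal Mreg_mult[OF alc] by simp
    also have "\<dots> = \<sigma>\<^sup>2 * al $ j + post_mean k \<sigma> h Xb z" using j alc pm by simp
    finally have "h z = \<sigma> * (\<sigma> * al $ j) + post_mean k \<sigma> h Xb z" by (simp add: power2_eq_square)
    also have "\<sigma> * (\<sigma> * al $ j) \<le> \<sigma> * ?B" using sB s by simp
    finally have "h z \<le> post_mean k \<sigma> h Xb z + ?B * \<sigma>" by (simp add: mult.commute add.commute)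
    moreover have "0 \<le> ?B * sqrt (c0 k \<sigma> Xb z)" using B0 c0 by simp
    ultimately show ?thesis by (simp add: distrib_left)
  qed
qed

theorem mainTheorem17:
  fixes k :: "'a \<Rightarrow> 'a \<Rightarrow> real" and \<sigma> :: real
    and f g h :: "'a \<Rightarrow> real" and x :: "nat \<Rightarrow> 'a"
    and L N n :: nat and xstar :: 'a
  assumes kernel: "pd_kernel k"
    and sigma_pos: "\<sigma> > 0"
    and f_rkhs: "in_rkhs k f"
    and g_rkhs: "in_rkhs (\<lambda>u v. \<sigma>\<^sup>2 * kdelta u v) g"
    and h_def: "h = (\<lambda>z. f z + g z)"
    and L_pos: "L \<ge> 1"
    and n_range: "1 \<le> n" "n \<le> N"
    and distinct: "inj_on x {1..N*L}"
    and alg: "\<And>m Z. 1 \<le> m \<Longrightarrow> m \<le> N \<Longrightarrow> length Z = L \<Longrightarrow>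
       acq k \<sigma> h (rkhs_norm (\<lambda>u v. k u v + \<sigma>\<^sup>2 * kdelta u v) h) x L m Z
       \<le> acq k \<sigma> h (rkhs_norm (\<lambda>u v. k u v + \<sigma>\<^sup>2 * kdelta u v) h) x L m (batch x L m)"
    and xstar_max: "\<And>z. f z \<le> f xstar"
  shows "(1 / real L) * (\<Sum>i=1..L. f xstar - f (x ((n-1)*L + i)))
     \<le> 2 * rkhs_norm (\<lambda>u v. k u v + \<sigma>\<^sup>2 * kdelta u v) h
          * sqrt (mat_trace (post_cov k \<sigma> (queried x ((n-1)*L)) (batch x L n)) / real L)
       + 2 * (rkhs_norm (\<lambda>u v. k u v + \<sigma>\<^sup>2 * kdelta u v) h
              + rkhs_norm (\<lambda>u v. \<sigma>\<^sup>2 * kdelta u v) g) * \<sigma>"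
proof -
  define t where "t = (n-1)*L"
  define Xb where "Xb = queried x t"
  define Z where "Z = batch x L n"
  define B where "B = rkhs_norm (\<lambda>u v. k u v + \<sigma>\<^sup>2 * kdelta u v) h"
  define G where "G = rkhs_norm (\<lambda>u v. \<sigma>\<^sup>2 * kdelta u v) g"
  define Lr where "Lr = real L"
  have Lr1: "Lr \<ge> 1" unfolding Lr_def using L_pos by simp
  have hr: "in_rkhs (ksig k \<sigma>) h" unfolding h_def by (rule h_rkhs[OF kernel f_rkhs g_rkhs])
  have B0: "0 \<le> B" unfolding B_def by (rule rkhs_norm_nonneg[OF hr])
  have G0: "0 \<le> G" unfolding G_def by (rule rkhs_norm_nonneg[OF g_rkhs])
  have tL: "t + L = n * L" unfolding t_def using n_range(1) by (cases n) auto
  have nN: "n * L \<le> N * L" using n_range(2) by simp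
  have tN: "t \<le> N * L" using tL nN by linarith
  have lenZ: "length Z = L" unfolding Z_def batch_def using tL unfolding t_def
    by (simp only: length_map length_upt)
  have lenX: "length Xb = t" unfolding Xb_def queried_def by simp
  have Znth: "Z ! i = x (t + Suc i)" if "i < L" for i
  proof -
    have l: "i < length [t+1..<n*L+1]" using that tL by simp
    have "[t+1..<n*L+1] ! i = t + 1 + i" using that tL by (intro nth_upt) simp
    then show ?thesis unfolding Z_def batch_def t_def[symmetric] using nth_map[OF l, of x] by simp
  qed
  have setX: "set Xb = x ` {1..t}" unfolding Xb_def queried_def by auto
  have setZ: "set Z = x ` {t+1..n*L}" unfolding Z_def batch_def t_def by auto
  have inj1: "inj_on x {1..t}" by (rule inj_on_subset[OF distinct]) (use tL nN tN in auto)
  have inj2: "inj_on x {t+1..n*L}" by (rule inj_on_subset[OF distinct]) (use tL nN tN in auto)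
  have s1: "set [1..<t+1] = {1..t}" by (simp only: set_upt) auto
  have s2: "set [(n-1)*L+1..<n*L+1] = {t+1..n*L}" unfolding t_def by (simp only: set_upt) auto
  have dX: "distinct Xb" unfolding Xb_def queried_def distinct_map s1 using inj1 by simp
  have dZ: "distinct Z" unfolding Z_def batch_def distinct_map s2 using inj2 by simp
  have disj: "set Xb \<inter> set Z = {}"
  proof (rule ccontr)
    assume "set Xb \<inter> set Z \<noteq> {}"
    then obtain i j where i: "i \<in> {1..t}" and j: "j \<in> {t+1..n*L}" and e: "x i = x j"
      unfolding setX setZ by blast
    have "j \<le> N * L" using j nN by (simp only: atLeastAtMost_iff) linarith
    then have "i = j" using inj_onD[OF distinct e] i j tN by auto
    then show False using i j by simp
  qed
  define Sf where "Sf = (\<Sum>i<L. f (Z!i))"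
  define Sg where "Sg = (\<Sum>i<L. g (Z!i))"
  define Sh where "Sh = (\<Sum>i<L. h (Z!i))"
  define Sm where "Sm = (\<Sum>i<L. post_mean k \<sigma> h Xb (Z!i))"
  define T where "T = mat_total (post_cov k \<sigma> Xb Z)"
  define Tr where "Tr = mat_trace (post_cov k \<sigma> Xb Z)"
  define c where "c = c0 k \<sigma> Xb xstar"
  define pm where "pm = post_mean k \<sigma> h Xb xstar"
  have c_nn: "0 \<le> c" unfolding c_def by (rule c0_nonneg[OF kernel sigma_pos])
  have T_nn: "0 \<le> T" unfolding T_def
    using pd_total[OF kernel sigma_pos, of Xb Z] self_sprod_nonneg
    by (smt (verit, ccfv_threshold) mult_nonneg_nonneg zero_le_power2)
  \<comment> \<open>the comparison point: L copies of xstar\<close>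
  have acq_rep: "acq k \<sigma> h B x L n (replicate L xstar) = pm + B * sqrt c"
  proof -
    have "acq k \<sigma> h B x L n (replicate L xstar) =
       (1 / Lr) * (Lr * pm) + B * (2 * sqrt (Lr * c / Lr) - sqrt (Lr\<^sup>2 * c / Lr\<^sup>2))"
      unfolding acq_def Let_def t_def[symmetric] Xb_def[symmetric] Lr_def
      by (simp add: rep_trace[OF kernel sigma_pos] rep_total[OF kernel sigma_pos] c_def pm_def
          sum_list_replicate)
    also have "\<dots> = pm + B * sqrt c" using Lr1 by simp
    finally show ?thesis .
  qed
  have sl: "sum_list (map F Z) = (\<Sum>i<L. F (Z!i))" for F :: "'a \<Rightarrow> real"
    unfolding sum_list_sum_nth lenZ[symmetric] atLeast0LessThan by simp
  have acq_Z: "acq k \<sigma> h B x L n Z = (1 / Lr) * Sm + B * (2 * sqrt (Tr / Lr) - sqrt (T / Lr\<^sup>2))"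
    unfolding acq_def Let_def t_def[symmetric] Xb_def[symmetric] Lr_def Sm_def Tr_def T_def sl
    by simp
  have cmp: "pm + B * sqrt c \<le> (1 / Lr) * Sm + B * (2 * sqrt (Tr / Lr) - sqrt (T / Lr\<^sup>2))"
    using alg[OF n_range, of "replicate L xstar"] unfolding B_def[symmetric] Z_def[symmetric]
    acq_rep acq_Z by simp
  have sTL: "sqrt (T / Lr\<^sup>2) = sqrt T / Lr" using Lr1 by (simp add: real_sqrt_divide)
  have bb: "(Sh - Sm)\<^sup>2 \<le> B\<^sup>2 * (T + Lr * \<sigma>\<^sup>2)"
    using batch_bound[OF kernel sigma_pos hr dZ dX disj] unfolding lenZ Sh_def Sm_def B_def T_def Lr_def .
  have "Sm - Sh \<le> B * sqrt (T + Lr * \<sigma>\<^sup>2)"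
    using bb B0 T_nn Lr1 sigma_pos by (intro sq_le_imp) (auto simp: power2_commute)
  also have "\<dots> \<le> B * (sqrt T + sqrt Lr * \<sigma>)"
  proof -
    have "sqrt (T + Lr * \<sigma>\<^sup>2) \<le> sqrt T + sqrt (Lr * \<sigma>\<^sup>2)"
      using T_nn Lr1 by (intro sqrt_add_le_add_sqrt) auto
    also have "sqrt (Lr * \<sigma>\<^sup>2) = sqrt Lr * \<sigma>" using sigma_pos by (simp add: real_sqrt_mult)
    finally show ?thesis using B0 by (intro mult_left_mono) auto
  qed
  also have "sqrt Lr \<le> Lr"
  proof -
    have "Lr * 1 \<le> Lr * Lr" using Lr1 by (intro mult_left_mono) auto
    then have "sqrt Lr \<le> sqrt (Lr * Lr)" by (intro real_sqrt_le_mono) simp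
    then show ?thesis using Lr1 by simp
  qed
  then have "B * (sqrt T + sqrt Lr * \<sigma>) \<le> B * (sqrt T + Lr * \<sigma>)"
    using B0 sigma_pos by (intro mult_left_mono) auto
  finally have i3: "Sm \<le> Sh + B * sqrt T + Lr * (B * \<sigma>)" by (simp add: algebra_simps)
  have Shfg: "Sh = Sf + Sg" unfolding Sh_def Sf_def Sg_def h_def by (simp add: sum.distrib)
  have Sg: "Sg \<le> Lr * (G * \<sigma>)"
  proof -
    have "Sg \<le> (\<Sum>i<L. G * \<sigma>)" unfolding Sg_def G_def
      using g_bound[OF g_rkhs sigma_pos] by (intro sum_mono) (simp add: abs_le_iff)
    then show ?thesis unfolding Lr_def by simp
  qed
  have gx: "- (G * \<sigma>) \<le> g xstar" using g_bound[OF g_rkhs sigma_pos, of xstar] unfolding G_def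
    by (simp add: abs_le_iff)
  have hx: "h xstar \<le> pm + B * (sqrt c + \<sigma>)"
    using xstar_bound[OF kernel sigma_pos hr dX] unfolding pm_def B_def c_def .
  have fx: "f xstar \<le> pm + B * sqrt c + B * \<sigma> + G * \<sigma>"
    using hx gx unfolding h_def by (simp add: algebra_simps)
  have i4: "Sm / Lr \<le> Sf / Lr + G * \<sigma> + B * sqrt T / Lr + B * \<sigma>"
  proof -
    have "Sm \<le> Sf + B * sqrt T + Lr * (B * \<sigma>) + Lr * (G * \<sigma>)" using i3 Shfg Sg by simp
    then have "Sm / Lr \<le> (Sf + B * sqrt T + Lr * (B * \<sigma>) + Lr * (G * \<sigma>)) / Lr"
      using Lr1 by (intro divide_right_mono) auto
    also have "\<dots> = Sf / Lr + G * \<sigma> + B * sqrt T / Lr + B * \<sigma>"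
      using Lr1 by (simp add: add_divide_distrib)
    finally show ?thesis .
  qed
  have main: "f xstar - Sf / Lr \<le> 2 * B * sqrt (Tr / Lr) + 2 * (B + G) * \<sigma>"
    using fx cmp i4 unfolding sTL by (simp add: algebra_simps)
  have lhs: "(1 / real L) * (\<Sum>i=1..L. f xstar - f (x ((n-1)*L + i))) = f xstar - Sf / Lr"
  proof -
    have "(\<Sum>i=1..L. f xstar - f (x ((n-1)*L + i))) = (\<Sum>i<L. f xstar - f (x (t + Suc i)))"
      unfolding t_def using sum.atLeast1_atMost_eq[of "\<lambda>i. f xstar - f (x ((n-1)*L + i))" L]
      by simp
    also have "\<dots> = Lr * f xstar - Sf" unfolding Sf_def Lr_def
      by (simp add: sum_subtractf Znth)
    finally show ?thesis unfolding Lr_def[symmetric] using Lr1 by (simp add: field_simps)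
  qed
  have fin: "(1 / real L) * (\<Sum>i=1..L. f xstar - f (x ((n-1)*L + i))) \<le>
      2 * B * sqrt (mat_trace (post_cov k \<sigma> (queried x ((n-1)*L)) (batch x L n)) / real L)
      + 2 * (B + G) * \<sigma>"
    unfolding lhs using main unfolding Tr_def Lr_def Xb_def Z_def t_def .
  then show ?thesis unfolding B_def G_def .
qed

end
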